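(* Let $G=(V,E)$ be a simple undirected graph, let $S_1,\ldots,S_k\subseteq E$, and let $b\in V$. Assign to every edge $e\in E$ an indeterminate $x_e$, and work in the polynomial ring $\mathbb{F}[x_e : e\in E]$ over a field $\mathbb{F}$ of characteristic $2$. For $l\ge 1$, let $\hat T_b(l)$ be the sum, over all admissible closed walks of length $l$ at $b$, of the weight of the walk, where: - a closed walk of length $l$ at $b$ is a sequence of vertices $b=v_0,v_1,\ldots,v_l=b$ with $\{v_{j-1},v_j\}\in E$ for all $j$ (vertices and edges may repeat), and its weight is $\prod_{j=1}^{l} x_{\{v_{j-1},v_j\}}$; - the walk is admissible if its first edge $\{v_0,v_1\}$ lies in $S_1$, and for every $i\in\{1,\ldots,k\}$ there is exactly one index $j\in\{1,\ldots,l\}$ with $\{v_{j-1},v_j\}\in S_i$. Suppose there exists a simple cycle in $G$ that contains exactly one edge of each $S_i$ and passes through an edge of $S_1$ having $b$ as an endpoint, and let $L$ be the minimum length of such a cycle. Then $\hat T_b(L)$ is a homogeneous polynomial of degree $L$ that is not identically zero, and $\hat T_b(l)$ is identically zero for every $l<L$.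
   Context: A simple cycle of length $L$ is a closed walk $v_0,\ldots,v_L=v_0$ with $v_0,\ldots,v_{L-1}$ pairwise distinct and $L\ge 3$; it "contains exactly one edge of $S_i$" if exactly one of its $L$ edges lies in $S_i$. *)

theory Defs
  imports Main "HOL-Library.Poly_Mapping"
begin

text \<open>Multivariate polynomials over 'F in indeterminates indexed by edges
  (an edge is a two-element vertex set): finitely supported maps from
  monomials (finitely supported exponent vectors on edges) to coefficients.\<close>
type_synonym ('v, 'f) epoly = "('v set \<Rightarrow>\<^sub>0 nat) \<Rightarrow>\<^sub>0 'f"

definition evar :: "'v set \<Rightarrow> ('v, 'f::comm_ring_1) epoly" where
  "evar e = Poly_Mapping.single (Poly_Mapping.single e 1) 1"

definition mon_degree :: "('a \<Rightarrow>\<^sub>0 nat) \<Rightarrow> nat" where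
  "mon_degree m = (\<Sum>e\<in>Poly_Mapping.keys m. Poly_Mapping.lookup m e)"

definition homogeneous_of_degree :: "((('a \<Rightarrow>\<^sub>0 nat) \<Rightarrow>\<^sub>0 'f::zero)) \<Rightarrow> nat \<Rightarrow> bool" where
  "homogeneous_of_degree p d \<longleftrightarrow> (\<forall>m\<in>Poly_Mapping.keys p. mon_degree m = d)"

definition simple_graph :: "'v set \<Rightarrow> 'v set set \<Rightarrow> bool" where
  "simple_graph V E \<longleftrightarrow> finite V \<and> (\<forall>e\<in>E. \<exists>u v. u \<in> V \<and> v \<in> V \<and> u \<noteq> v \<and> e = {u, v})"

definition closed_walk :: "'v set set \<Rightarrow> 'v \<Rightarrow> nat \<Rightarrow> (nat \<Rightarrow> 'v) \<Rightarrow> bool" where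
  "closed_walk E b l w \<longleftrightarrow> w 0 = b \<and> w l = b \<and> (\<forall>j\<in>{1..l}. {w (j-1), w j} \<in> E)"

definition edges_in :: "nat \<Rightarrow> (nat \<Rightarrow> 'v) \<Rightarrow> 'v set set \<Rightarrow> nat" where
  "edges_in l w S = card {j\<in>{1..l}. {w (j-1), w j} \<in> S}"

definition admissible_walk ::
  "'v set set \<Rightarrow> nat \<Rightarrow> (nat \<Rightarrow> 'v set set) \<Rightarrow> 'v \<Rightarrow> nat \<Rightarrow> (nat \<Rightarrow> 'v) \<Rightarrow> bool" where
  "admissible_walk E k S b l w \<longleftrightarrow> closed_walk E b l w \<and> {w 0, w 1} \<in> S 1 \<and>
     (\<forall>i\<in>{1..k}. edges_in l w (S i) = 1)"

text \<open>Walks are identified with their vertex sequences w 0, ..., w l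
  (values outside 0..l are normalised to undefined).\<close>
definition T_hat ::
  "'v set set \<Rightarrow> nat \<Rightarrow> (nat \<Rightarrow> 'v set set) \<Rightarrow> 'v \<Rightarrow> nat \<Rightarrow> ('v, 'f::comm_ring_1) epoly" where
  "T_hat E k S b l =
     (\<Sum>w\<in>{w. admissible_walk E k S b l w \<and> (\<forall>j>l. w j = undefined)}.
        \<Prod>j\<in>{1..l}. evar {w (j-1), w j})"

definition simple_cycle :: "'v set set \<Rightarrow> nat \<Rightarrow> (nat \<Rightarrow> 'v) \<Rightarrow> bool" where
  "simple_cycle E L w \<longleftrightarrow> L \<ge> 3 \<and> w L = w 0 \<and> (\<forall>j\<in>{1..L}. {w (j-1), w j} \<in> E) \<and>
     inj_on w {0..<L}"

definition good_cycle ::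
  "'v set set \<Rightarrow> nat \<Rightarrow> (nat \<Rightarrow> 'v set set) \<Rightarrow> 'v \<Rightarrow> nat \<Rightarrow> (nat \<Rightarrow> 'v) \<Rightarrow> bool" where
  "good_cycle E k S b L w \<longleftrightarrow> simple_cycle E L w \<and>
     (\<forall>i\<in>{1..k}. edges_in L w (S i) = 1) \<and>
     (\<exists>j\<in>{1..L}. {w (j-1), w j} \<in> S 1 \<and> b \<in> {w (j-1), w j})"

end

theory Submission
  imports Defs "HOL-Library.FuncSet"
begin


lemma prod_evar:
  assumes "finite J"
  shows "(\<Prod>j\<in>J. evar (f j) :: ('v,'f::comm_ring_1) epoly) =
         Poly_Mapping.single (\<Sum>j\<in>J. Poly_Mapping.single (f j) (1::nat)) 1"
  using assms
proof (induction J rule: finite_induct)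
  case empty then show ?case by simp
next
  case (insert x F)
  then show ?case by (simp add: evar_def mult_single)
qed

lemma mon_degree_add:
  "mon_degree (a + b :: 'a \<Rightarrow>\<^sub>0 nat) = mon_degree a + mon_degree b"
  unfolding mon_degree_def by (rule setsum_keys_plus_distrib) auto

lemma mon_degree_sum:
  assumes "finite J"
  shows "mon_degree (\<Sum>j\<in>J. Poly_Mapping.single (f j) (1::nat)) = card J"
  using assms
proof (induction J rule: finite_induct)
  case empty then show ?case by (simp add: mon_degree_def)
next
  case (insert x F)
  then show ?case by (simp add: mon_degree_add) (simp add: mon_degree_def)
qed

lemma lookup_mon:
  assumes "finite J"
  shows "Poly_Mapping.lookup (\<Sum>j\<in>J. Poly_Mapping.single (f j) (1::nat)) e = card {j\<in>J. f j = e}"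
  using assms
proof (induction J rule: finite_induct)
  case empty then show ?case by simp
next
  case (insert x F)
  have "{j\<in>insert x F. f j = e} = (if f x = e then insert x {j\<in>F. f j = e} else {j\<in>F. f j = e})"
    by auto
  then show ?case using insert by (simp add: lookup_add lookup_single when_def)
qed

lemma double_zero:
  assumes "CHAR('f::field) = 2"
  shows "(p::('v,'f) epoly) + p = 0"
proof -
  have two: "(2::'f) = 0" using of_nat_CHAR[where 'a='f] assms by simp
  have xx: "\<And>x::'f. x + x = 0" proof -
    fix x :: 'f have "x + x = 2 * x" by simp
    then show "x + x = 0" using two by simp
  qed
  show ?thesis by (rule poly_mapping_eqI) (simp only: lookup_add xx lookup_zero)
qed

lemma involution_sum:
  fixes g :: "'a \<Rightarrow> 'b::comm_monoid_add"
  assumes "finite A" "\<forall>x\<in>A. \<phi> x \<in> A" "\<forall>x\<in>A. \<phi> (\<phi> x) = x"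
    "\<forall>x\<in>A. g (\<phi> x) = g x" "\<forall>x\<in>A. g x + g x = 0"
  shows "sum g A = sum g {x\<in>A. \<phi> x = x}"
  using assms
proof (induction "card A" arbitrary: A rule: less_induct)
  case less
  show ?case
  proof (cases "\<exists>x\<in>A. \<phi> x \<noteq> x")
    case False
    then have "{x\<in>A. \<phi> x = x} = A" by auto
    then show ?thesis by simp
  next
    case True
    then obtain x where x: "x \<in> A" "\<phi> x \<noteq> x" by auto
    let ?A = "A - {x, \<phi> x}"
    have px: "\<phi> x \<in> A" using less x by auto
    have c: "card ?A < card A" using x px less(2)
      by (intro psubset_card_mono) auto
    have cl: "\<forall>y\<in>?A. \<phi> y \<in> ?A"
    proof
      fix y assume y: "y \<in> ?A"
      have "\<phi> y \<noteq> x" using y less(4) by (metis Diff_iff insertCI)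
      moreover have "\<phi> y \<noteq> \<phi> x" using y less(4) x(1) by (metis Diff_iff insertCI)
      ultimately show "\<phi> y \<in> ?A" using y less(3) by auto
    qed
    have IH: "sum g ?A = sum g {y\<in>?A. \<phi> y = y}"
      by (rule less(1)[OF c]) (use less(2-6) cl in auto)
    have "sum g A = sum g ?A + sum g {x, \<phi> x}"
      using less(2) x px by (intro sum.subset_diff) auto
    also have "sum g {x, \<phi> x} = 0" using x less(5,6) by simp
    also have "sum g ?A = sum g {y\<in>?A. \<phi> y = y}" by (rule IH)
    also have "{y\<in>?A. \<phi> y = y} = {y\<in>A. \<phi> y = y}" using x less(4) px by auto
    finally show ?thesis by simp
  qed
qed



definition lastpos :: "(nat \<Rightarrow> 'v) \<Rightarrow> nat \<Rightarrow> nat \<Rightarrow> nat" where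
  "lastpos w l a = (GREATEST t. t \<le> l \<and> w t = w a)"

lemma lastpos:
  assumes "a \<le> l"
  shows "a \<le> lastpos w l a" "lastpos w l a \<le> l" "w (lastpos w l a) = w a"
    "\<And>t. lastpos w l a < t \<Longrightarrow> t \<le> l \<Longrightarrow> w t \<noteq> w a"
proof -
  have P: "a \<le> l \<and> w a = w a" using assms by simp
  have B: "\<And>y. y \<le> l \<and> w y = w a \<Longrightarrow> y \<le> l" by simp
  have G: "lastpos w l a \<le> l \<and> w (lastpos w l a) = w a"
    unfolding lastpos_def by (rule GreatestI_nat[where P="\<lambda>t. t \<le> l \<and> w t = w a", OF P B])
  show "a \<le> lastpos w l a" unfolding lastpos_def by (rule Greatest_le_nat[where P="\<lambda>t. t \<le> l \<and> w t = w a", OF P B])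
  show "lastpos w l a \<le> l" "w (lastpos w l a) = w a" using G by auto
  fix t assume "lastpos w l a < t" "t \<le> l"
  moreover have "w t = w a \<Longrightarrow> t \<le> lastpos w l a"
    unfolding lastpos_def using \<open>t \<le> l\<close> by (intro Greatest_le_nat[where P="\<lambda>t. t \<le> l \<and> w t = w a", OF _ B]) auto
  ultimately show "w t \<noteq> w a" by auto
qed

lemma lastpos_eqI:
  assumes "t \<le> l" "w t = w a" "\<And>t'. t < t' \<Longrightarrow> t' \<le> l \<Longrightarrow> w t' \<noteq> w a"
  shows "lastpos w l a = t"
  unfolding lastpos_def
  by (rule Greatest_equality) (use assms in \<open>auto simp: not_less[symmetric]\<close>)

definition pal :: "(nat \<Rightarrow> 'v) \<Rightarrow> nat \<Rightarrow> nat \<Rightarrow> bool" where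
  "pal w a T \<longleftrightarrow> (\<forall>j. a \<le> j \<and> j \<le> T \<longrightarrow> w j = w (a + T - j))"

function find_seg :: "(nat \<Rightarrow> 'v) \<Rightarrow> nat \<Rightarrow> nat \<Rightarrow> (nat \<times> nat) option" where
  "find_seg w l a = (if l \<le> a then None
     else if \<not> pal w a (lastpos w l a) then Some (a, lastpos w l a)
     else find_seg w l (Suc (lastpos w l a)))"
  by pat_completeness auto
termination
proof (relation "measure (\<lambda>(w,l,a). l - a)")
  show "wf (measure (\<lambda>(w,l,a). l - a))" by simp
  fix w :: "nat \<Rightarrow> 'v" and l a :: nat
  assume "\<not> l \<le> a"
  then have "a \<le> lastpos w l a" "lastpos w l a \<le> l" using lastpos[of a l w] by auto
  then show "((w, l, Suc (lastpos w l a)), w, l, a) \<in> measure (\<lambda>(w,l,a). l - a)"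
    using \<open>\<not> l \<le> a\<close> by auto
qed

declare find_seg.simps[simp del]

definition rev_seg :: "nat \<Rightarrow> nat \<Rightarrow> (nat \<Rightarrow> 'v) \<Rightarrow> nat \<Rightarrow> 'v" where
  "rev_seg a T w j = (if a \<le> j \<and> j \<le> T then w (a + T - j) else w j)"

lemma rev_seg_twice: "rev_seg a T (rev_seg a T w) = w"
  by (rule ext) (auto simp: rev_seg_def)

lemma pal_rev_seg: "pal (rev_seg a T w) a T \<longleftrightarrow> pal w a T"
  unfolding pal_def rev_seg_def
  apply safe
  subgoal for j by (drule spec[of _ "a + T - j"]) auto
  subgoal for j by (drule spec[of _ "a + T - j"]) auto
  done

lemma find_seg_Some:
  "find_seg w l c = Some (a, T) \<Longrightarrow> c \<le> a \<and> a < l \<and> T = lastpos w l a \<and> \<not> pal w a T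
     \<and> find_seg (rev_seg a T w) l c = Some (a, T)"
proof (induction w l c rule: find_seg.induct)
  case (1 w l c)
  let ?T = "lastpos w l c"
  let ?w = "rev_seg a T w"
  have cl: "c < l" using 1(2) by (subst (asm) find_seg.simps) (auto split: if_splits)
  have lp: "c \<le> ?T" "?T \<le> l" "w ?T = w c" "\<And>t. ?T < t \<Longrightarrow> t \<le> l \<Longrightarrow> w t \<noteq> w c"
    using lastpos[of c l w] cl by auto
  show ?case
  proof (cases "pal w c ?T")
    case False
    then have eq: "a = c" "T = ?T" using 1(2) cl by (subst (asm) find_seg.simps, auto)+
    have "lastpos ?w l c = ?T"
    proof (rule lastpos_eqI)
      show "?T \<le> l" by (rule lp)
      show "?w ?T = ?w c" using eq lp by (simp add: rev_seg_def)
      fix t assume "?T < t" "t \<le> l"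
      then show "?w t \<noteq> ?w c" using eq lp by (simp add: rev_seg_def)
    qed
    moreover have "\<not> pal ?w c ?T" using False eq pal_rev_seg by metis
    ultimately have "find_seg ?w l c = Some (c, ?T)" using cl by (subst find_seg.simps) simp
    then show ?thesis using eq cl False by simp
  next
    case True
    then have rec: "find_seg w l (Suc ?T) = Some (a, T)" using 1(2) cl
      by (subst (asm) find_seg.simps) simp
    have IH: "Suc ?T \<le> a \<and> a < l \<and> T = lastpos w l a \<and> \<not> pal w a T
       \<and> find_seg ?w l (Suc ?T) = Some (a, T)"
    proof -
      have "\<not> l \<le> c" "\<not> \<not> pal w c ?T" using True cl by auto
      from 1(1)[OF this rec] show ?thesis .
    qed
    have la: "a \<le> T" "T \<le> l" "w T = w a" using lastpos[of a l w] IH by auto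
    have agree: "\<And>t. t < a \<Longrightarrow> ?w t = w t" by (simp add: rev_seg_def)
    have "lastpos ?w l c = ?T"
    proof (rule lastpos_eqI)
      show "?T \<le> l" by (rule lp)
      show "?w ?T = ?w c" using agree IH lp by simp
      fix t assume t: "?T < t" "t \<le> l"
      show "?w t \<noteq> ?w c"
      proof (cases "a \<le> t \<and> t \<le> T")
        case True
        then have "?w t = w (a + T - t)" by (simp add: rev_seg_def)
        moreover have "?T < a + T - t" "a + T - t \<le> l" using True IH la by linarith+
        then have "w (a + T - t) \<noteq> w c" using lp(4) by blast
        ultimately show ?thesis using agree IH lp by simp
      next
        case False
        then have "?w t = w t" unfolding rev_seg_def by auto
        then show ?thesis using lp(4)[OF t] agree IH lp by simp
      qed
    qed
    moreover have "pal ?w c ?T"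
    proof -
      have ag: "\<And>j. j \<le> ?T \<Longrightarrow> ?w j = w j" using agree IH by auto
      show ?thesis unfolding pal_def
      proof (intro allI impI)
        fix j assume j: "c \<le> j \<and> j \<le> ?T"
        then have "c + ?T - j \<le> ?T" by linarith
        then show "?w j = ?w (c + ?T - j)" using ag j True unfolding pal_def by simp
      qed
    qed
    ultimately have "find_seg ?w l c = find_seg ?w l (Suc ?T)" using cl
      by (subst find_seg.simps) simp
    then have "find_seg ?w l c = Some (a, T)" using IH by (metis (no_types))
    moreover have "c \<le> a" using IH lp by linarith
    ultimately show ?thesis using IH by blast
  qed
qed

lemma find_seg_Some_props:
  assumes "find_seg w l c = Some (a, T)"
  shows "c \<le> a" "a \<le> T" "T \<le> l" "w T = w a" "\<not> pal w a T"
    "find_seg (rev_seg a T w) l c = Some (a, T)" "rev_seg a T w \<noteq> w"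
proof -
  note F = find_seg_Some[OF assms]
  show "c \<le> a" "\<not> pal w a T" "find_seg (rev_seg a T w) l c = Some (a, T)" using F by auto
  show "a \<le> T" "T \<le> l" "w T = w a" using F lastpos[of a l w] by auto
  show "rev_seg a T w \<noteq> w"
  proof
    assume eq: "rev_seg a T w = w"
    have "pal w a T" unfolding pal_def
    proof (intro allI impI)
      fix j assume j: "a \<le> j \<and> j \<le> T"
      have "rev_seg a T w j = w j" by (simp add: eq)
      then show "w j = w (a + T - j)" using j by (simp add: rev_seg_def)
    qed
    then show False using F by blast
  qed
qed



definition sig :: "nat \<Rightarrow> nat \<Rightarrow> nat \<Rightarrow> nat" where
  "sig a T j = (if a < j \<and> j \<le> T then a + T + 1 - j else j)"

lemma rev_seg_edge:
  assumes "1 \<le> a" "a \<le> T" "w a = w T" "1 \<le> j"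
  shows "{rev_seg a T w (j-1), rev_seg a T w j} = {w (sig a T j - 1), w (sig a T j)}"
proof (cases "a < j \<and> j \<le> T")
  case True
  then have "rev_seg a T w (j-1) = w (a + T + 1 - j)" "rev_seg a T w j = w (a + T - j)"
    "sig a T j = a + T + 1 - j" "a + T + 1 - j - 1 = a + T - j"
    by (auto simp: rev_seg_def sig_def)
  then show ?thesis by (simp add: insert_commute)
next
  case False
  then have s: "sig a T j = j" unfolding sig_def by auto
  show ?thesis
  proof (cases "j \<le> a")
    case True
    then have "rev_seg a T w (j-1) = w (j-1)" using assms unfolding rev_seg_def by auto
    moreover have "rev_seg a T w j = w j" using True assms by (auto simp: rev_seg_def)
    ultimately show ?thesis using s by simp
  next
    case False
    then have "T < j" using \<open>\<not> (a < j \<and> j \<le> T)\<close> by simp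
    then have "rev_seg a T w j = w j" by (simp add: rev_seg_def)
    moreover have "rev_seg a T w (j-1) = w (j-1)" using \<open>T < j\<close> assms
      by (cases "j - 1 = T") (auto simp: rev_seg_def)
    ultimately show ?thesis using s by simp
  qed
qed

lemma sig_bij:
  assumes "a \<le> T" "T \<le> l"
  shows "bij_betw (sig a T) {1..l} {1..l}"
  by (rule bij_betw_byWitness[where f'="sig a T"]) (use assms in \<open>auto simp: sig_def\<close>)

lemma walk_perm:
  assumes "bij_betw \<sigma> {1..l} {1..l}"
    "\<forall>j\<in>{1..l}. {w' (j-1), w' j} = {w (\<sigma> j - 1), w (\<sigma> j)}"
  shows "(\<Prod>j\<in>{1..l}. evar {w' (j-1), w' j} :: ('v,'f::comm_ring_1) epoly)
       = (\<Prod>j\<in>{1..l}. evar {w (j-1), w j})"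
    "edges_in l w' X = edges_in l w X"
    "(\<forall>j\<in>{1..l}. {w (j-1), w j} \<in> E) \<Longrightarrow> (\<forall>j\<in>{1..l}. {w' (j-1), w' j} \<in> E)"
proof -
  have "(\<Prod>j\<in>{1..l}. evar {w' (j-1), w' j} :: ('v,'f) epoly)
      = (\<Prod>j\<in>{1..l}. (\<lambda>i. evar {w (i-1), w i}) (\<sigma> j))"
    using assms(2) by (intro prod.cong) auto
  also have "\<dots> = (\<Prod>j\<in>{1..l}. evar {w (j-1), w j})"
    by (rule prod.reindex_bij_betw[OF assms(1)])
  finally show "(\<Prod>j\<in>{1..l}. evar {w' (j-1), w' j} :: ('v,'f) epoly)
       = (\<Prod>j\<in>{1..l}. evar {w (j-1), w j})" .
  have inj: "inj_on \<sigma> {1..l}" and im: "\<sigma> ` {1..l} = {1..l}"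
    using assms(1) by (auto simp: bij_betw_def)
  have "{j\<in>{1..l}. {w' (j-1), w' j} \<in> X} = {j\<in>{1..l}. {w (\<sigma> j - 1), w (\<sigma> j)} \<in> X}"
    using assms(2) by auto
  moreover have "\<sigma> ` {j\<in>{1..l}. {w (\<sigma> j - 1), w (\<sigma> j)} \<in> X} = {i\<in>{1..l}. {w (i - 1), w i} \<in> X}"
  proof
    show "\<sigma> ` {j\<in>{1..l}. {w (\<sigma> j - 1), w (\<sigma> j)} \<in> X} \<subseteq> {i\<in>{1..l}. {w (i - 1), w i} \<in> X}"
      using im by auto
    show "{i\<in>{1..l}. {w (i - 1), w i} \<in> X} \<subseteq> \<sigma> ` {j\<in>{1..l}. {w (\<sigma> j - 1), w (\<sigma> j)} \<in> X}"
    proof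
      fix i assume i: "i \<in> {i\<in>{1..l}. {w (i - 1), w i} \<in> X}"
      then obtain j where "j \<in> {1..l}" "i = \<sigma> j" using im by (metis (no_types, lifting) imageE mem_Collect_eq)
      then show "i \<in> \<sigma> ` {j\<in>{1..l}. {w (\<sigma> j - 1), w (\<sigma> j)} \<in> X}" using i by auto
    qed
  qed
  moreover have "card (\<sigma> ` {j\<in>{1..l}. {w (\<sigma> j - 1), w (\<sigma> j)} \<in> X})
       = card {j\<in>{1..l}. {w (\<sigma> j - 1), w (\<sigma> j)} \<in> X}"
    by (rule card_image) (rule inj_on_subset[OF inj], auto)
  ultimately show "edges_in l w' X = edges_in l w X" unfolding edges_in_def by simp
  show "(\<forall>j\<in>{1..l}. {w (j-1), w j} \<in> E) \<Longrightarrow> (\<forall>j\<in>{1..l}. {w' (j-1), w' j} \<in> E)"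
    using assms(2) im by (metis image_eqI)
qed

definition walks :: "'v set set \<Rightarrow> nat \<Rightarrow> (nat \<Rightarrow> 'v set set) \<Rightarrow> 'v \<Rightarrow> nat \<Rightarrow> (nat \<Rightarrow> 'v) set" where
  "walks E k S b l = {w. admissible_walk E k S b l w \<and> (\<forall>j>l. w j = undefined)}"

definition phi :: "nat \<Rightarrow> (nat \<Rightarrow> 'v) \<Rightarrow> (nat \<Rightarrow> 'v)" where
  "phi l w = (case find_seg w l 1 of None \<Rightarrow> w | Some (a, T) \<Rightarrow> rev_seg a T w)"

lemma phi_props:
  assumes "w \<in> walks E k S b l"
  shows "phi l w \<in> walks E k S b l" "phi l (phi l w) = w"
    "(\<Prod>j\<in>{1..l}. evar {phi l w (j-1), phi l w j} :: ('v,'f::comm_ring_1) epoly)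
       = (\<Prod>j\<in>{1..l}. evar {w (j-1), w j})"
    "phi l w = w \<longleftrightarrow> find_seg w l 1 = None"
proof -
  have "(phi l w \<in> walks E k S b l \<and> phi l (phi l w) = w \<and>
    (\<Prod>j\<in>{1..l}. evar {phi l w (j-1), phi l w j} :: ('v,'f::comm_ring_1) epoly)
       = (\<Prod>j\<in>{1..l}. evar {w (j-1), w j})) \<and>
    (phi l w = w \<longleftrightarrow> find_seg w l 1 = None)"
  proof (cases "find_seg w l 1")
    case None
    then show ?thesis using assms by (simp add: phi_def)
  next
    case (Some p)
    then obtain a T where F: "find_seg w l 1 = Some (a, T)" by (cases p) auto
    note P = find_seg_Some_props[OF F]
    let ?w = "rev_seg a T w"
    have pw: "phi l w = ?w" using F by (simp add: phi_def)
    have ppw: "phi l ?w = w" using P(6) by (simp add: phi_def rev_seg_twice)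
    have bij: "bij_betw (sig a T) {1..l} {1..l}" using P by (intro sig_bij) auto
    have ed: "\<forall>j\<in>{1..l}. {?w (j-1), ?w j} = {w (sig a T j - 1), w (sig a T j)}"
      using P by (intro ballI rev_seg_edge) auto
    note WP = walk_perm[OF bij ed]
    have s1: "sig a T 1 = 1" using P by (simp add: sig_def)
    have l1: "1 \<in> {1..l}" using P by auto
    have "{?w (1-1), ?w 1} = {w (sig a T 1 - 1), w (sig a T 1)}" using ed l1 by blast
    then have e1: "{?w 0, ?w 1} = {w 0, w 1}" using s1 by simp
    have w0: "?w 0 = w 0" using P by (simp add: rev_seg_def)
    have wl: "?w l = w l" using P by (auto simp: rev_seg_def)
    have beyond: "\<forall>j>l. ?w j = w j" using P by (auto simp: rev_seg_def)
    have "?w \<in> walks E k S b l"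
      using assms WP(2,3) w0 wl beyond e1
      unfolding walks_def admissible_walk_def closed_walk_def by auto
    then show ?thesis using pw ppw WP(1) P(7) F by simp
  qed
  then show "phi l w \<in> walks E k S b l" "phi l (phi l w) = w"
    "(\<Prod>j\<in>{1..l}. evar {phi l w (j-1), phi l w j} :: ('v,'f::comm_ring_1) epoly)
       = (\<Prod>j\<in>{1..l}. evar {w (j-1), w j})"
    "phi l w = w \<longleftrightarrow> find_seg w l 1 = None" by blast+
qed



lemma pal_pair:
  assumes "pal w c T" "c < j" "j \<le> T" "\<forall>i. c < i \<and> i \<le> T \<longrightarrow> w (i-1) \<noteq> w i"
  shows "c < c+T+1-j" "c+T+1-j \<le> T" "c+T+1-j \<noteq> j"
    "{w (c+T+1-j-1), w (c+T+1-j)} = {w (j-1), w j}"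
proof -
  have a: "w j = w (c+T-j)" using assms(1-3) unfolding pal_def by auto
  have "c \<le> j-1" "j-1 \<le> T" using assms(2,3) by auto
  then have b: "w (j-1) = w (c+T-(j-1))" using assms(1) unfolding pal_def by blast
  have e1: "c+T+1-j-1 = c+T-j" and e2: "c+T-(j-1) = c+T+1-j" using assms(2,3) by auto
  show "c < c+T+1-j" "c+T+1-j \<le> T" using assms(2,3) by auto
  show "c+T+1-j \<noteq> j"
  proof
    assume "c+T+1-j = j"
    then have "c+T-j = j - 1" by linarith
    then have "w j = w (j-1)" using a by simp
    moreover have "w (j-1) \<noteq> w j" using assms(2,3,4) by blast
    ultimately show False by simp
  qed
  show "{w (c+T+1-j-1), w (c+T+1-j)} = {w (j-1), w j}"
  proof -
    have "w (c+T+1-j-1) = w j" using a e1 by simp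
    moreover have "w (c+T+1-j) = w (j-1)" using b e2 by simp
    ultimately show ?thesis by (simp only: insert_commute)
  qed
qed

lemma find_seg_None:
  "find_seg w l c = None \<Longrightarrow> c \<le> l \<Longrightarrow> (\<forall>j. c < j \<and> j \<le> l \<longrightarrow> w (j-1) \<noteq> w j) \<Longrightarrow>
   \<exists>(n::nat) p h. p 0 = w c \<and> p n = w l \<and> inj_on p {0..n} \<and> p ` {0..n} \<subseteq> w ` {c..l} \<and>
     inj_on h {1..n} \<and> h ` {1..n} \<subseteq> {Suc c..l} \<and>
     (\<forall>i\<in>{1..n}. {p (i-1), p i} = {w (h i - 1), w (h i)}) \<and>
     (\<forall>j\<in>{Suc c..l}. j \<notin> h ` {1..n} \<longrightarrow>
        (\<exists>j'\<in>{Suc c..l}. j' \<noteq> j \<and> {w (j'-1), w j'} = {w (j-1), w j}))"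
proof (induction w l c rule: find_seg.induct)
  case (1 w l c)
  show ?case
  proof (cases "c = l")
    case True
    show ?thesis
      apply (rule exI[where x="0::nat"])
      apply (rule exI[where x="\<lambda>_::nat. w l"])
      apply (rule exI[where x="id::nat\<Rightarrow>nat"])
      using True by auto
  next
    case False
    then have cl: "c < l" using 1(3) by simp
    let ?T = "lastpos w l c"
    have lp: "c \<le> ?T" "?T \<le> l" "w ?T = w c" "\<And>t. ?T < t \<Longrightarrow> t \<le> l \<Longrightarrow> w t \<noteq> w c"
      using lastpos[of c l w] cl by auto
    have pal: "pal w c ?T" using 1(2) cl by (subst (asm) find_seg.simps) (auto split: if_splits)
    have rec: "find_seg w l (Suc ?T) = None" using 1(2) cl pal
      by (subst (asm) find_seg.simps) simp
    have pair: "\<And>j. c < j \<Longrightarrow> j \<le> ?T \<Longrightarrow>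
        (\<exists>j'\<in>{Suc c..l}. j' \<noteq> j \<and> {w (j'-1), w j'} = {w (j-1), w j})"
    proof -
      fix j assume j: "c < j" "j \<le> ?T"
      have nl: "\<forall>i. c < i \<and> i \<le> ?T \<longrightarrow> w (i-1) \<noteq> w i" using 1(4) lp by auto
      note pp = pal_pair[OF pal j nl]
      show "\<exists>j'\<in>{Suc c..l}. j' \<noteq> j \<and> {w (j'-1), w j'} = {w (j-1), w j}"
        by (rule bexI[of _ "c + ?T + 1 - j"]) (use pp lp in auto)
    qed
    show ?thesis
    proof (cases "?T = l")
      case True
      show ?thesis
      proof (rule exI[where x="0::nat"], rule exI[where x="\<lambda>_::nat. w c"], rule exI[where x="id::nat\<Rightarrow>nat"], intro conjI)
        show "w c = w l" using True lp by simp
        show "(\<lambda>_. w c) ` {0..0} \<subseteq> w ` {c..l}" using cl by auto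
        show "\<forall>j\<in>{Suc c..l}. j \<notin> id ` {1..0} \<longrightarrow>
          (\<exists>j'\<in>{Suc c..l}. j' \<noteq> j \<and> {w (j' - 1), w j'} = {w (j - 1), w j})"
          using pair True by auto
      qed auto
    next
      case False
      then have Tl: "?T < l" using lp by simp
      have nl: "\<forall>j. Suc ?T < j \<and> j \<le> l \<longrightarrow> w (j-1) \<noteq> w j" using 1(4) lp by auto
      have STl: "Suc ?T \<le> l" using Tl by simp
      have ncl: "\<not> l \<le> c" "\<not> \<not> pal w c ?T" using cl pal by auto
      note ex = 1(1)[OF ncl rec STl nl]
      obtain n :: nat and p h where IH: "p 0 = w (Suc ?T)" "p n = w l" "inj_on p {0..n}"
        "p ` {0..n} \<subseteq> w ` {Suc ?T..l}" "inj_on h {1..n}" "h ` {1..n} \<subseteq> {Suc (Suc ?T)..l}"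
        "\<forall>i\<in>{1..n}. {p (i-1), p i} = {w (h i - 1), w (h i)}"
        "\<forall>j\<in>{Suc (Suc ?T)..l}. j \<notin> h ` {1..n} \<longrightarrow>
          (\<exists>j'\<in>{Suc (Suc ?T)..l}. j' \<noteq> j \<and> {w (j'-1), w j'} = {w (j-1), w j})"
        using ex by blast
      define p' where "p' i = (if i = 0 then w c else p (i - 1))" for i
      define h' where "h' i = (if i = 1 then Suc ?T else h (i - 1))" for i
      have pne: "\<And>i. i \<le> n \<Longrightarrow> p i \<noteq> w c"
      proof -
        fix i assume "i \<le> n"
        then obtain t where "t \<in> {Suc ?T..l}" "p i = w t" using IH(4) by fastforce
        then show "p i \<noteq> w c" using lp(4)[of t] by auto
      qed
      show ?thesis
      proof (rule exI[where x="Suc n"], rule exI[where x=p'], rule exI[where x=h'], intro conjI)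
        show "p' 0 = w c" by (simp add: p'_def)
        show "p' (Suc n) = w l" using IH(2) by (simp add: p'_def)
        show "inj_on p' {0..Suc n}"
        proof (rule inj_onI)
          fix x y assume xy: "x \<in> {0..Suc n}" "y \<in> {0..Suc n}" "p' x = p' y"
          show "x = y"
          proof (cases "x = 0")
            case True
            show ?thesis
            proof (rule ccontr)
              assume "x \<noteq> y" then have "y \<noteq> 0" using True by simp
              then have "p' y = p (y-1)" "y - 1 \<le> n" using xy by (auto simp: p'_def)
              then show False using pne[of "y-1"] xy(3) True by (simp add: p'_def)
            qed
          next
            case False
            show ?thesis
            proof (cases "y = 0")
              case True
              then have "p' x = p (x-1)" "x - 1 \<le> n" using xy False by (auto simp: p'_def)
              then show ?thesis using pne[of "x-1"] xy(3) True by (simp add: p'_def)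
            next
              case F2: False
              then have "p (x-1) = p (y-1)" using xy False by (simp add: p'_def)
              then have "x - 1 = y - 1" using IH(3) xy by (auto dest: inj_onD)
              then show ?thesis using False F2 by simp
            qed
          qed
        qed
        show "p' ` {0..Suc n} \<subseteq> w ` {c..l}"
        proof
          fix v assume "v \<in> p' ` {0..Suc n}"
          then obtain i where i: "i \<in> {0..Suc n}" "v = p' i" by auto
          show "v \<in> w ` {c..l}"
          proof (cases "i = 0")
            case True then show ?thesis using i cl by (auto simp: p'_def)
          next
            case False
            then have "v \<in> w ` {Suc ?T..l}" using i IH(4) by (auto simp: p'_def)
            then show ?thesis using lp by auto
          qed
        qed
        show "inj_on h' {1..Suc n}"
        proof (rule inj_onI)
          fix x y assume xy: "x \<in> {1..Suc n}" "y \<in> {1..Suc n}" "h' x = h' y"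
          have hr: "\<And>i. i \<in> {2..Suc n} \<Longrightarrow> h' i \<in> {Suc (Suc ?T)..l} \<and> h' i = h (i - 1)"
          proof -
            fix i assume "i \<in> {2..Suc n}"
            then have "h' i = h (i-1)" "i - 1 \<in> {1..n}" by (auto simp: h'_def)
            then show "h' i \<in> {Suc (Suc ?T)..l} \<and> h' i = h (i - 1)" using IH(6) by blast
          qed
          show "x = y"
          proof (cases "x = 1")
            case True
            show ?thesis
            proof (rule ccontr)
              assume "x \<noteq> y" then have "y \<in> {2..Suc n}" using True xy by auto
              then have "h' y \<in> {Suc (Suc ?T)..l}" using hr by blast
              moreover have "h' x = Suc ?T" using True by (simp add: h'_def)
              ultimately show False using xy(3) by simp
            qed
          next
            case False
            show ?thesis
            proof (cases "y = 1")
              case True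
              have "x \<in> {2..Suc n}" using False xy by auto
              then have "h' x \<in> {Suc (Suc ?T)..l}" using hr by blast
              moreover have "h' y = Suc ?T" using True by (simp add: h'_def)
              ultimately show ?thesis using xy(3) by simp
            next
              case F2: False
              then have "h (x-1) = h (y-1)" using xy False by (simp add: h'_def)
              moreover have "x - 1 \<in> {1..n}" "y - 1 \<in> {1..n}" using xy False F2 by auto
              ultimately have "x - 1 = y - 1" using IH(5) by (meson inj_onD)
              then show ?thesis using xy by (simp add: atLeastAtMost_iff) arith
            qed
          qed
        qed
        show "h' ` {1..Suc n} \<subseteq> {Suc c..l}"
        proof
          fix v assume "v \<in> h' ` {1..Suc n}"
          then obtain i where i: "i \<in> {1..Suc n}" "v = h' i" by auto
          show "v \<in> {Suc c..l}"
          proof (cases "i = 1")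
            case True then show ?thesis using i lp Tl by (auto simp: h'_def)
          next
            case False
            then have "v = h (i-1)" "i - 1 \<in> {1..n}" using i by (auto simp: h'_def)
            then have "v \<in> {Suc (Suc ?T)..l}" using IH(6) by blast
            then show ?thesis using lp by auto
          qed
        qed
        show "\<forall>i\<in>{1..Suc n}. {p' (i-1), p' i} = {w (h' i - 1), w (h' i)}"
        proof
          fix i assume i: "i \<in> {1..Suc n}"
          show "{p' (i-1), p' i} = {w (h' i - 1), w (h' i)}"
          proof (cases "i = 1")
            case True then show ?thesis using IH(1) lp by (simp add: p'_def h'_def)
          next
            case False
            then have "i - 1 \<in> {1..n}" using i by auto
            then have "{p (i-1-1), p (i-1)} = {w (h (i-1) - 1), w (h (i-1))}" using IH(7) by blast
            moreover have "p' (i-1) = p (i-1-1)" "p' i = p (i-1)" "h' i = h (i-1)"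
              using False i by (auto simp: p'_def h'_def)
            ultimately show ?thesis by simp
          qed
        qed
        show "\<forall>j\<in>{Suc c..l}. j \<notin> h' ` {1..Suc n} \<longrightarrow>
          (\<exists>j'\<in>{Suc c..l}. j' \<noteq> j \<and> {w (j'-1), w j'} = {w (j-1), w j})"
        proof (intro ballI impI)
          fix j assume j: "j \<in> {Suc c..l}" "j \<notin> h' ` {1..Suc n}"
          show "\<exists>j'\<in>{Suc c..l}. j' \<noteq> j \<and> {w (j'-1), w j'} = {w (j-1), w j}"
          proof (cases "j \<le> ?T")
            case True then show ?thesis using pair j by auto
          next
            case False
            have "h' 1 = Suc ?T" "1 \<in> {1..Suc n}" by (simp_all add: h'_def)
            then have "j \<noteq> Suc ?T" using j(2) by (metis image_eqI)
            then have j2: "j \<in> {Suc (Suc ?T)..l}" using False j by auto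
            have "j \<notin> h ` {1..n}"
            proof
              assume "j \<in> h ` {1..n}"
              then obtain i where "i \<in> {1..n}" "j = h i" by auto
              then have "h' (Suc i) = j" "Suc i \<in> {1..Suc n}" by (auto simp: h'_def)
              then show False using j(2) by (metis image_eqI)
            qed
            then obtain j' where "j' \<in> {Suc (Suc ?T)..l}" "j' \<noteq> j" "{w (j'-1), w j'} = {w (j-1), w j}"
              using IH(8) j2 by blast
            then show ?thesis using lp by (intro bexI[of _ j']) auto
          qed
        qed
      qed
    qed
  qed
qed



lemma no_loop:
  assumes "simple_graph V E" "{x, y} \<in> E" shows "x \<noteq> y"
  using assms unfolding simple_graph_def by (metis doubleton_eq_iff insert_absorb2)

lemma fixed_gives_cycle:
  assumes G: "simple_graph V E" and k: "k \<ge> 1" and W: "w \<in> walks E k S b l"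
    and F: "find_seg w l 1 = None" and l: "l \<ge> 1"
  shows "\<exists>L' q. good_cycle E k S b L' q \<and> L' \<le> l"
proof -
  have adm: "w 0 = b" "w l = b" "\<forall>j\<in>{1..l}. {w (j-1), w j} \<in> E" "{w 0, w 1} \<in> S 1"
    "\<forall>i\<in>{1..k}. edges_in l w (S i) = 1"
    using W unfolding walks_def admissible_walk_def closed_walk_def by auto
  have nl: "\<forall>j. 1 < j \<and> j \<le> l \<longrightarrow> w (j-1) \<noteq> w j" using adm(3) no_loop[OF G] by auto
  have nl1: "w 0 \<noteq> w 1" using adm(3) no_loop[OF G] l by force
  obtain n :: nat and p h where FP: "p 0 = w 1" "p n = w l" "inj_on p {0..n}"
    "p ` {0..n} \<subseteq> w ` {1..l}" "inj_on h {1..n}" "h ` {1..n} \<subseteq> {Suc 1..l}"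
    "\<forall>i\<in>{1..n}. {p (i-1), p i} = {w (h i - 1), w (h i)}"
    "\<forall>j\<in>{Suc 1..l}. j \<notin> h ` {1..n} \<longrightarrow>
        (\<exists>j'\<in>{Suc 1..l}. j' \<noteq> j \<and> {w (j'-1), w j'} = {w (j-1), w j})"
    using find_seg_None[OF F l nl] by blast
  define q where "q i = (if i = 0 then b else p (i - 1))" for i
  define H where "H j = (if j = 1 then 1 else h (j - 1))" for j
  have Hrange: "\<And>j. j \<in> {1..Suc n} \<Longrightarrow> H j \<in> {1..l}"
  proof -
    fix j assume j: "j \<in> {1..Suc n}"
    show "H j \<in> {1..l}"
    proof (cases "j = 1")
      case True then show ?thesis using l by (simp add: H_def)
    next
      case False
      then have "j - 1 \<in> {1..n}" using j by auto
      then have "h (j-1) \<in> {Suc 1..l}" using FP(6) by blast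
      then show ?thesis using False by (simp add: H_def)
    qed
  qed
  have Hinj: "inj_on H {1..Suc n}"
  proof (rule inj_onI)
    fix x y assume xy: "x \<in> {1..Suc n}" "y \<in> {1..Suc n}" "H x = H y"
    have big: "\<And>j. j \<in> {1..Suc n} \<Longrightarrow> j \<noteq> 1 \<Longrightarrow> H j \<ge> 2 \<and> H j = h (j - 1) \<and> j - 1 \<in> {1..n}"
    proof -
      fix j assume j: "j \<in> {1..Suc n}" "j \<noteq> 1"
      then have "j - 1 \<in> {1..n}" by auto
      then have "h (j-1) \<in> {Suc 1..l}" using FP(6) by blast
      then show "H j \<ge> 2 \<and> H j = h (j - 1) \<and> j - 1 \<in> {1..n}" using j \<open>j - 1 \<in> {1..n}\<close> by (simp add: H_def)
    qed
    show "x = y"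
    proof (cases "x = 1"; cases "y = 1")
      assume "x \<noteq> 1" "y \<noteq> 1"
      then have "h (x-1) = h (y-1)" "x - 1 \<in> {1..n}" "y - 1 \<in> {1..n}" using big xy by auto
      then have "x - 1 = y - 1" using FP(5) by (meson inj_onD)
      then show ?thesis using xy by (simp add: atLeastAtMost_iff) arith
    next
      assume "x = 1" "y \<noteq> 1" then show ?thesis using big[of y] xy by (simp add: H_def)
    next
      assume "x \<noteq> 1" "y = 1" then show ?thesis using big[of x] xy by (simp add: H_def)
    qed simp
  qed
  have qedge: "\<And>j. j \<in> {1..Suc n} \<Longrightarrow> {q (j-1), q j} = {w (H j - 1), w (H j)}"
  proof -
    fix j assume j: "j \<in> {1..Suc n}"
    show "{q (j-1), q j} = {w (H j - 1), w (H j)}"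
    proof (cases "j = 1")
      case True then show ?thesis using adm(1) FP(1) by (simp add: q_def H_def)
    next
      case False
      then have "j - 1 \<in> {1..n}" using j by auto
      then have "{p (j-1-1), p (j-1)} = {w (h (j-1) - 1), w (h (j-1))}" using FP(7) by blast
      moreover have "q (j-1) = p (j-1-1)" "q j = p (j-1)" "H j = h (j-1)"
        using False j by (auto simp: q_def H_def)
      ultimately show ?thesis by simp
    qed
  qed
  have len: "Suc n \<le> l"
  proof -
    have "card (H ` {1..Suc n}) \<le> card {1..l}" using Hrange by (intro card_mono) auto
    then show ?thesis using card_image[OF Hinj] by simp
  qed
  have cnt: "\<And>X. card {j\<in>{1..l}. {w (j-1), w j} \<in> X} = 1 \<Longrightarrow> edges_in (Suc n) q X = 1"
  proof -
    fix X assume c1: "card {j\<in>{1..l}. {w (j-1), w j} \<in> X} = 1"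
    then obtain j0 where j0: "{j\<in>{1..l}. {w (j-1), w j} \<in> X} = {j0}" by (meson card_1_singletonE)
    let ?Y = "{j\<in>{1..Suc n}. {q (j-1), q j} \<in> X}"
    have sub: "H ` ?Y \<subseteq> {j0}"
    proof
      fix v assume "v \<in> H ` ?Y"
      then obtain j where j: "j \<in> {1..Suc n}" "{q (j-1), q j} \<in> X" "v = H j" by auto
      then have "{w (H j - 1), w (H j)} \<in> X" using qedge[OF j(1)] by simp
      then have "H j \<in> {j\<in>{1..l}. {w (j-1), w j} \<in> X}" using Hrange[OF j(1)] by simp
      then show "v \<in> {j0}" using j0 j(3) by (metis singletonD)
    qed
    have le1: "card ?Y \<le> 1"
    proof -
      have "card (H ` ?Y) = card ?Y" by (rule card_image) (rule inj_on_subset[OF Hinj], auto)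
      moreover have "card (H ` ?Y) \<le> card {j0}" using sub by (intro card_mono) auto
      ultimately show ?thesis by simp
    qed
    have "j0 \<in> H ` {1..Suc n}"
    proof (rule ccontr)
      assume nin: "j0 \<notin> H ` {1..Suc n}"
      have j0r: "j0 \<in> {1..l}" "{w (j0-1), w j0} \<in> X" using j0 by auto
      have "H 1 = 1" "(1::nat) \<in> {1..Suc n}" by (simp_all add: H_def)
      then have "j0 \<noteq> 1" using nin by (metis image_eqI)
      then have j02: "j0 \<in> {Suc 1..l}" using j0r by auto
      have "j0 \<notin> h ` {1..n}"
      proof
        assume "j0 \<in> h ` {1..n}"
        then obtain i where "i \<in> {1..n}" "j0 = h i" by auto
        then have "H (Suc i) = j0" "Suc i \<in> {1..Suc n}" by (auto simp: H_def)
        then show False using nin by (metis image_eqI)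
      qed
      then obtain j' where j': "j' \<in> {Suc 1..l}" "j' \<noteq> j0" "{w (j'-1), w j'} = {w (j0-1), w j0}"
        using FP(8) j02 by blast
      then have "j' \<in> {j\<in>{1..l}. {w (j-1), w j} \<in> X}" using j0r by auto
      then show False using j0 j'(2) by auto
    qed
    then obtain j1 where j1: "j1 \<in> {1..Suc n}" "H j1 = j0" by auto
    then have "j1 \<in> ?Y" using qedge[OF j1(1)] j0 by auto
    moreover have "finite ?Y" by simp
    ultimately have "card ?Y > 0" by (metis card_gt_0_iff empty_iff)
    then show "edges_in (Suc n) q X = 1" using le1 unfolding edges_in_def by simp
  qed
  have n2: "n \<ge> 2"
  proof (rule ccontr)
    assume "\<not> n \<ge> 2"
    then have "n = 0 \<or> n = 1" by auto
    then show False
    proof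
      assume "n = 0"
      then have "w 1 = w 0" using FP(1,2) adm(1,2) by simp
      then show False using nl1 by simp
    next
      assume n1: "n = 1"
      have e: "{w (h 1 - 1), w (h 1)} = {w 0, w 1}" using FP(7) n1 FP(1,2) adm(1,2)
        by (auto simp: insert_commute)
      have h1: "h 1 \<in> {Suc 1..l}" using FP(6) n1 by auto
      have "{1, h 1} \<subseteq> {j\<in>{1..l}. {w (j-1), w j} \<in> S 1}" using e h1 adm(4) l by auto
      then have "card {1, h 1} \<le> card {j\<in>{1..l}. {w (j-1), w j} \<in> S 1}" by (intro card_mono) auto
      moreover have "card {1::nat, h 1} = 2" using h1 by auto
      moreover have "card {j\<in>{1..l}. {w (j-1), w j} \<in> S 1} = 1"
        using adm(5) k unfolding edges_in_def by auto
      ultimately show False by simp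
    qed
  qed
  have gc: "good_cycle E k S b (Suc n) q"
    unfolding good_cycle_def simple_cycle_def
  proof (intro conjI)
    show "3 \<le> Suc n" using n2 by simp
    show "q (Suc n) = q 0" using FP(2) adm(2) by (simp add: q_def)
    show "\<forall>j\<in>{1..Suc n}. {q (j - 1), q j} \<in> E"
    proof
      fix j assume j: "j \<in> {1..Suc n}"
      have "{w (H j - 1), w (H j)} \<in> E" using adm(3) Hrange[OF j] by blast
      then show "{q (j - 1), q j} \<in> E" using qedge[OF j] by simp
    qed
    show "inj_on q {0..<Suc n}"
    proof (rule inj_onI)
      fix x y assume xy: "x \<in> {0..<Suc n}" "y \<in> {0..<Suc n}" "q x = q y"
      have pb: "\<And>i. i < n \<Longrightarrow> p i \<noteq> b"
      proof
        fix i assume "i < n" "p i = b"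
        then have "p i = p n" using FP(2) adm(2) by simp
        moreover have "i \<in> {0..n}" "n \<in> {0..n}" using \<open>i < n\<close> by auto
        ultimately have "i = n" using FP(3) by (meson inj_onD)
        then show False using \<open>i < n\<close> by simp
      qed
      show "x = y"
      proof (cases "x = 0"; cases "y = 0")
        assume "x \<noteq> 0" "y \<noteq> 0"
        then have "p (x-1) = p (y-1)" using xy by (simp add: q_def)
        then have "x - 1 = y - 1" using FP(3) xy by (auto dest: inj_onD)
        then show ?thesis using \<open>x \<noteq> 0\<close> \<open>y \<noteq> 0\<close> by simp
      next
        assume "x = 0" "y \<noteq> 0"
        moreover have "y - 1 < n" using xy \<open>y \<noteq> 0\<close> by auto
        ultimately show ?thesis using pb[of "y-1"] xy by (simp add: q_def)
      next
        assume "x \<noteq> 0" "y = 0"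
        moreover have "x - 1 < n" using xy \<open>x \<noteq> 0\<close> by auto
        ultimately show ?thesis using pb[of "x-1"] xy by (simp add: q_def)
      qed simp
    qed
    show "\<forall>i\<in>{1..k}. edges_in (Suc n) q (S i) = 1" using cnt adm(5) unfolding edges_in_def by auto
    show "\<exists>j\<in>{1..Suc n}. {q (j - 1), q j} \<in> S 1 \<and> b \<in> {q (j - 1), q j}"
      by (rule bexI[of _ 1]) (use adm FP(1) in \<open>auto simp: q_def\<close>)
  qed
  then show ?thesis using len by blast
qed



lemma card_ge1: "j \<in> {x\<in>{1..(L::nat)}. P x} \<Longrightarrow> card {x\<in>{1..L}. P x} \<ge> 1"
proof -
  assume a: "j \<in> {x\<in>{1..(L::nat)}. P x}"
  have "finite {x\<in>{1..(L::nat)}. P x}" by simp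
  then have "card {x\<in>{1..L}. P x} > 0" using a card_gt_0_iff by blast
  then show ?thesis by simp
qed

lemma card_ge2: "j \<in> {x\<in>{1..(L::nat)}. P x} \<Longrightarrow> j' \<in> {x\<in>{1..L}. P x} \<Longrightarrow> j \<noteq> j'
  \<Longrightarrow> card {x\<in>{1..L}. P x} \<ge> 2"
proof -
  assume a: "j \<in> {x\<in>{1..L}. P x}" "j' \<in> {x\<in>{1..L}. P x}" "j \<noteq> j'"
  have "card {j, j'} \<le> card {x\<in>{1..L}. P x}" using a by (intro card_mono) auto
  then show ?thesis using a(3) by simp
qed

lemma cyc_eq:
  fixes w0 :: "nat \<Rightarrow> 'v" and L :: nat
  assumes "inj_on w0 {0..<L}" "w0 L = w0 0" "x \<le> L" "y \<le> L"
  shows "w0 x = w0 y \<longleftrightarrow> (if x = L then 0 else x) = (if y = L then 0 else y)"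
proof (cases "L = 0")
  case True
  then show ?thesis using assms(3,4) by simp
next
  case False
  have a: "w0 x = w0 (if x = L then 0 else x)" "w0 y = w0 (if y = L then 0 else y)"
    using assms(2) by simp_all
  have b: "(if x = L then 0 else x) \<in> {0..<L}" "(if y = L then 0 else y) \<in> {0..<L}"
    using assms(3,4) False by auto
  show ?thesis unfolding a using inj_on_eq_iff[OF assms(1) b] .
qed

lemma cyc_edges_distinct:
  fixes w0 :: "nat \<Rightarrow> 'v" and L :: nat
  assumes "inj_on w0 {0..<L}" "w0 L = w0 0" "L \<ge> 3" "i \<in> {1..L}" "i' \<in> {1..L}"
    "{w0 (i-1), w0 i} = {w0 (i'-1), w0 i'}"
  shows "i = i'"
proof -
  note ce = cyc_eq[OF assms(1,2)]
  have r: "i - 1 \<le> L" "i' - 1 \<le> L" "i \<le> L" "i' \<le> L" "i - 1 \<noteq> L" "i' - 1 \<noteq> L" "1 \<le> i" "1 \<le> i'"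
    using assms(3-5) by auto
  have "(w0 (i-1) = w0 (i'-1) \<and> w0 i = w0 i') \<or> (w0 (i-1) = w0 i' \<and> w0 i = w0 (i'-1))"
    using assms(6) by (simp add: doubleton_eq_iff)
  then show ?thesis
  proof
    assume "w0 (i-1) = w0 (i'-1) \<and> w0 i = w0 i'"
    then have "i - 1 = i' - 1" using ce[OF r(1,2)] r(5,6) by simp
    then show ?thesis using r(7,8) by linarith
  next
    assume a: "w0 (i-1) = w0 i' \<and> w0 i = w0 (i'-1)"
    have h1: "i - 1 = (if i' = L then 0 else i')" using a ce[OF r(1,4)] r(5) by simp
    have h2: "(if i = L then 0 else i) = i' - 1" using a ce[OF r(3,2)] r(6) by simp
    show ?thesis
    proof (cases "i' = L")
      case True
      then have "i = 1" using h1 r by simp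
      then show ?thesis using h2 True assms(3) by simp
    next
      case False
      then have "i - 1 = i'" using h1 by simp
      then show ?thesis using h2 r assms(3) by (cases "i = L") simp_all
    qed
  qed
qed

definition ecount :: "(nat \<Rightarrow> 'v) \<Rightarrow> nat \<Rightarrow> 'v set \<Rightarrow> nat" where
  "ecount w L e = card {j\<in>{1..L}. {w (j-1), w j} = e}"

lemma uniq_walk:
  assumes G: "simple_graph V E" and k: "k \<ge> 1" and W: "w \<in> walks E k S b L"
    and W0: "w0 \<in> walks E k S b L" and inj: "inj_on w0 {0..<L}" and L3: "L \<ge> 3"
    and cnt: "\<And>e. ecount w L e = ecount w0 L e"
  shows "w = w0"
proof -
  have adm: "w 0 = b" "w L = b" "\<forall>j\<in>{1..L}. {w (j-1), w j} \<in> E" "{w 0, w 1} \<in> S 1"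
    "\<forall>i\<in>{1..k}. edges_in L w (S i) = 1" "\<forall>j>L. w j = undefined"
    using W unfolding walks_def admissible_walk_def closed_walk_def by auto
  have adm0: "w0 0 = b" "w0 L = b" "\<forall>j\<in>{1..L}. {w0 (j-1), w0 j} \<in> E" "{w0 0, w0 1} \<in> S 1"
    "\<forall>i\<in>{1..k}. edges_in L w0 (S i) = 1" "\<forall>j>L. w0 j = undefined"
    using W0 unfolding walks_def admissible_walk_def closed_walk_def by auto
  have cyc: "w0 L = w0 0" using adm0 by simp
  have dist: "\<And>i. i \<in> {1..L} \<Longrightarrow> ecount w0 L {w0 (i-1), w0 i} = 1"
  proof -
    fix i assume i: "i \<in> {1..L}"
    have "{j\<in>{1..L}. {w0 (j-1), w0 j} = {w0 (i-1), w0 i}} = {i}"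
      using cyc_edges_distinct[OF inj cyc L3 _ i] i by auto
    then show "ecount w0 L {w0 (i-1), w0 i} = 1" unfolding ecount_def by simp
  qed
  have S10: "{j\<in>{1..L}. {w0 (j-1), w0 j} \<in> S 1} = {1}"
  proof -
    have c1: "card {j\<in>{1..L}. {w0 (j-1), w0 j} \<in> S 1} = 1" using adm0(5) k unfolding edges_in_def by auto
    have "1 \<in> {j\<in>{1..L}. {w0 (j-1), w0 j} \<in> S 1}" using adm0(4) L3 by auto
    moreover obtain x where "{j\<in>{1..L}. {w0 (j-1), w0 j} \<in> S 1} = {x}" using c1 card_1_singletonE by blast
    ultimately show ?thesis by (metis singletonD)
  qed
  have ex: "\<And>j. j \<in> {1..L} \<Longrightarrow> \<exists>i\<in>{1..L}. {w0 (i-1), w0 i} = {w (j-1), w j}"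
  proof -
    fix j assume j: "j \<in> {1..L}"
    have "ecount w L {w (j-1), w j} \<ge> 1" unfolding ecount_def by (rule card_ge1[of j]) (use j in auto)
    then have "ecount w0 L {w (j-1), w j} \<ge> 1" using cnt by simp
    then have "{i\<in>{1..L}. {w0 (i-1), w0 i} = {w (j-1), w j}} \<noteq> {}" unfolding ecount_def
      by (metis card.empty not_one_le_zero)
    then show "\<exists>i\<in>{1..L}. {w0 (i-1), w0 i} = {w (j-1), w j}" by auto
  qed
  have main: "\<forall>i\<le>j. w i = w0 i" if "j \<le> L" for j
    using that
  proof (induction j)
    case 0 then show ?case using adm adm0 by simp
  next
    case (Suc j)
    then have IH: "\<forall>i\<le>j. w i = w0 i" by simp
    have nxt: "w (Suc j) = w0 (Suc j)"
    proof (cases "j = 0")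
      case True
      obtain i where i: "i \<in> {1..L}" "{w0 (i-1), w0 i} = {w 0, w 1}" using ex[of 1] L3 by auto
      then have "i \<in> {j\<in>{1..L}. {w0 (j-1), w0 j} \<in> S 1}" using adm(4) by auto
      then have "i = 1" using S10 by (metis singletonD)
      then have "{w0 0, w0 1} = {w0 0, w 1}" using i adm adm0 by simp
      then show ?thesis using True by (auto simp: doubleton_eq_iff)
    next
      case False
      obtain i where i: "i \<in> {1..L}" "{w0 (i-1), w0 i} = {w j, w (Suc j)}" using ex[of "Suc j"] Suc by auto
      then have i2: "{w0 (i-1), w0 i} = {w0 j, w (Suc j)}" using IH by simp
      have ce: "\<And>x y. x \<le> L \<Longrightarrow> y \<le> L \<Longrightarrow> w0 x = w0 y \<longleftrightarrow> (if x = L then 0 else x) = (if y = L then 0 else y)"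
        using cyc_eq[OF inj cyc] by blast
      have "(w0 (i-1) = w0 j \<and> w0 i = w (Suc j)) \<or> (w0 (i-1) = w (Suc j) \<and> w0 i = w0 j)"
        using i2 by (simp add: doubleton_eq_iff)
      then show ?thesis
      proof
        assume a: "w0 (i-1) = w0 j \<and> w0 i = w (Suc j)"
        have r: "i - 1 \<le> L" "i - 1 \<noteq> L" "j \<le> L" "j \<noteq> L" using i Suc by auto
        have "w0 (i-1) = w0 j" using a by simp
        then have "i - 1 = j" using ce[OF r(1) r(3)] r(2,4) by simp
        then have "i = Suc j" using i by auto
        then show ?thesis using a by simp
      next
        assume a: "w0 (i-1) = w (Suc j) \<and> w0 i = w0 j"
        have r: "i \<le> L" "j \<le> L" "j \<noteq> L" using i Suc by auto
        have "w0 i = w0 j" using a by simp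
        then have "(if i = L then 0 else i) = j" using ce[OF r(1) r(2)] r(3) by simp
        then have "i = j" using False by (cases "i = L") auto
        then have ew: "{w (j-1), w j} = {w (Suc j - 1), w (Suc j)}"
          using a IH by (auto simp: insert_commute)
        have "j \<in> {x\<in>{1..L}. {w (x-1), w x} = {w0 (j-1), w0 j}}" using IH Suc False by auto
        moreover have "Suc j \<in> {x\<in>{1..L}. {w (x-1), w x} = {w0 (j-1), w0 j}}"
          using ew IH Suc False by auto
        ultimately have "ecount w L {w0 (j-1), w0 j} \<ge> 2" unfolding ecount_def by (rule card_ge2) simp
        moreover have "ecount w0 L {w0 (j-1), w0 j} = 1" using dist[of j] Suc False by auto
        ultimately show ?thesis using cnt by simp
      qed
    qed
    show ?case using IH nxt le_Suc_eq by blast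
  qed
  show "w = w0"
  proof
    fix x show "w x = w0 x"
      using main[of L] adm(6) adm0(6) by (cases "x \<le> L") auto
  qed
qed



lemma endo_bij:
  assumes "\<forall>i\<in>{1..(L::nat)}. f i \<in> {1..L}" "inj_on f {1..L}"
  shows "bij_betw f {1..L} {1..L}"
  by (rule bij_betw_imageI[OF assms(2)], rule endo_inj_surj) (use assms in auto)

lemma rot_walk:
  assumes sc: "simple_cycle E L q" and cnt: "\<forall>i\<in>{1..k}. edges_in L q (S i) = 1"
    and r: "r < L" and qb: "q r = b" and s1: "{q r, q (Suc r)} \<in> S 1"
  shows "\<exists>w0. w0 \<in> walks E k S b L \<and> inj_on w0 {0..<L}"
proof -
  have L3: "L \<ge> 3" and qL: "q L = q 0" and qE: "\<forall>j\<in>{1..L}. {q (j-1), q j} \<in> E"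
    and qinj: "inj_on q {0..<L}" using sc unfolding simple_cycle_def by auto
  define rot where "rot x = (if x + r < L then x + r else x + r - L)" for x
  define w0 where "w0 x = (if x \<le> L then q (rot x) else undefined)" for x
  define \<sigma> where "\<sigma> i = rot (i - 1) + 1" for i
  have rotlt: "\<And>x. x \<le> L \<Longrightarrow> rot x < L" using r by (auto simp: rot_def)
  have rotinj: "\<And>x y. x < L \<Longrightarrow> y < L \<Longrightarrow> rot x = rot y \<Longrightarrow> x = y"
    using r by (auto simp: rot_def split: if_splits)
  have ed: "\<forall>i\<in>{1..L}. {w0 (i-1), w0 i} = {q (\<sigma> i - 1), q (\<sigma> i)}"
  proof
    fix i assume i: "i \<in> {1..L}"
    have "i - 1 \<le> L" using i by auto
    then have a: "w0 (i-1) = q (\<sigma> i - 1)" by (simp add: w0_def \<sigma>_def)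
    have "q (rot i) = q (rot (i-1) + 1)"
    proof (cases "i - 1 + r < L")
      case True
      show ?thesis
      proof (cases "i + r < L")
        case True
        then show ?thesis using \<open>i - 1 + r < L\<close> i by (simp add: rot_def)
      next
        case False
        then have "i + r = L" using \<open>i - 1 + r < L\<close> i by auto
        then have "rot i = 0" "rot (i-1) + 1 = L" using i by (auto simp: rot_def)
        then show ?thesis using qL by simp
      qed
    next
      case False
      then have "rot (i-1) = i - 1 + r - L" "rot i = i + r - L" using i by (auto simp: rot_def)
      moreover have "1 \<le> i" using i by simp
      then have "i + r - L = i - 1 + r - L + 1" using False by arith
      ultimately show ?thesis by simp
    qed
    then have b: "w0 i = q (\<sigma> i)" using i by (simp add: w0_def \<sigma>_def)
    show "{w0 (i-1), w0 i} = {q (\<sigma> i - 1), q (\<sigma> i)}" using a b by simp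
  qed
  have bij: "bij_betw \<sigma> {1..L} {1..L}"
  proof (rule endo_bij)
    show "\<forall>i\<in>{1..L}. \<sigma> i \<in> {1..L}" using rotlt by (auto simp: \<sigma>_def Suc_le_eq)
    show "inj_on \<sigma> {1..L}"
    proof (rule inj_onI)
      fix x y assume xy: "x \<in> {1..L}" "y \<in> {1..L}" "\<sigma> x = \<sigma> y"
      then have "rot (x-1) = rot (y-1)" by (simp add: \<sigma>_def)
      then have "x - 1 = y - 1" using rotinj xy by auto
      then show "x = y" using xy by auto
    qed
  qed
  note WP = walk_perm[OF bij ed]
  have s: "\<sigma> 1 = Suc r" using r by (simp add: \<sigma>_def rot_def)
  have w00: "w0 0 = b" using r qb by (simp add: w0_def rot_def)
  have w0L: "w0 L = b" using r qb by (simp add: w0_def rot_def)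
  have "(1::nat) \<in> {1..L}" using L3 by simp
  then have "{w0 (1-1), w0 1} = {q (\<sigma> 1 - 1), q (\<sigma> 1)}" using ed by blast
  then have e1: "{w0 0, w0 1} = {q r, q (Suc r)}" using s by simp
  have "w0 \<in> walks E k S b L"
    unfolding walks_def admissible_walk_def closed_walk_def mem_Collect_eq
  proof (intro conjI)
    show "\<forall>j\<in>{1..L}. {w0 (j - 1), w0 j} \<in> E" by (rule WP(3)[OF qE])
    show "{w0 0, w0 1} \<in> S 1" using e1 s1 by simp
    show "\<forall>i\<in>{1..k}. edges_in L w0 (S i) = 1" using WP(2) cnt by simp
    show "\<forall>j>L. w0 j = undefined" by (simp add: w0_def)
  qed (use w00 w0L in auto)
  moreover have "inj_on w0 {0..<L}"
  proof (rule inj_onI)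
    fix x y assume xy: "x \<in> {0..<L}" "y \<in> {0..<L}" "w0 x = w0 y"
    then have "q (rot x) = q (rot y)" by (simp add: w0_def)
    moreover have "rot x \<in> {0..<L}" "rot y \<in> {0..<L}" using rotlt xy by auto
    ultimately have "rot x = rot y" using qinj by (meson inj_onD)
    then show "x = y" using rotinj xy by auto
  qed
  ultimately show ?thesis by blast
qed

lemma reflect_cycle:
  assumes sc: "simple_cycle E L q"
  shows "simple_cycle E L (\<lambda>x. q (L - x))" "\<And>X. edges_in L (\<lambda>x. q (L - x)) X = edges_in L q X"
proof -
  have L3: "L \<ge> 3" and qL: "q L = q 0" and qE: "\<forall>j\<in>{1..L}. {q (j-1), q j} \<in> E"
    and qinj: "inj_on q {0..<L}" using sc unfolding simple_cycle_def by auto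
  define \<sigma> where "\<sigma> i = L + 1 - i" for i
  have bij: "bij_betw \<sigma> {1..L} {1..L}"
    by (rule bij_betw_byWitness[where f'=\<sigma>]) (auto simp: \<sigma>_def)
  have ed: "\<forall>i\<in>{1..L}. {q (L - (i-1)), q (L - i)} = {q (\<sigma> i - 1), q (\<sigma> i)}"
  proof
    fix i assume i: "i \<in> {1..L}"
    then have "L - (i - 1) = \<sigma> i" "L - i = \<sigma> i - 1" by (auto simp: \<sigma>_def)
    then show "{q (L - (i-1)), q (L - i)} = {q (\<sigma> i - 1), q (\<sigma> i)}" by (simp add: insert_commute)
  qed
  note WP = walk_perm[OF bij ed]
  show "\<And>X. edges_in L (\<lambda>x. q (L - x)) X = edges_in L q X" using WP(2) by simp
  have inj: "inj_on (\<lambda>x. q (L - x)) {0..<L}"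
  proof (rule inj_onI)
    fix x y assume xy: "x \<in> {0..<L}" "y \<in> {0..<L}" "q (L - x) = q (L - y)"
    then have "(if L - x = L then 0 else L - x) = (if L - y = L then 0 else L - y)"
      using cyc_eq[OF qinj qL, of "L - x" "L - y"] by simp
    then show "x = y" using xy by (auto split: if_splits)
  qed
  show "simple_cycle E L (\<lambda>x. q (L - x))"
    unfolding simple_cycle_def using L3 qL inj WP(3)[OF qE] by simp
qed

lemma cycle_to_walk:
  assumes gc: "good_cycle E k S b L q"
  shows "\<exists>w0. w0 \<in> walks E k S b L \<and> inj_on w0 {0..<L}"
proof -
  have sc: "simple_cycle E L q" and cnt: "\<forall>i\<in>{1..k}. edges_in L q (S i) = 1"
    and ex: "\<exists>j\<in>{1..L}. {q (j-1), q j} \<in> S 1 \<and> b \<in> {q (j-1), q j}"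
    using gc unfolding good_cycle_def by auto
  obtain j where j: "j \<in> {1..L}" "{q (j-1), q j} \<in> S 1" "b \<in> {q (j-1), q j}" using ex by blast
  show ?thesis
  proof (cases "b = q (j-1)")
    case True
    show ?thesis by (rule rot_walk[OF sc cnt, of "j-1"]) (use j True in auto)
  next
    case False
    then have bj: "b = q j" using j by auto
    note R = reflect_cycle[OF sc]
    have cnt': "\<forall>i\<in>{1..k}. edges_in L (\<lambda>x. q (L - x)) (S i) = 1" using cnt R(2) by simp
    have "L - (L - j) = j" "L - Suc (L - j) = j - 1" using j by auto
    then show ?thesis
      by (intro rot_walk[OF R(1) cnt', of "L - j"]) (use j bj in \<open>auto simp: insert_commute\<close>)
  qed
qed



lemma walks_finite:
  assumes G: "simple_graph V E" and bV: "b \<in> V"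
  shows "finite (walks E k S b l)"
proof -
  have fV: "finite V" using G unfolding simple_graph_def by simp
  have EV: "\<And>e. e \<in> E \<Longrightarrow> e \<subseteq> V"
  proof -
    fix e assume "e \<in> E"
    then obtain u v where "u \<in> V" "v \<in> V" "e = {u, v}" using G unfolding simple_graph_def by blast
    then show "e \<subseteq> V" by simp
  qed
  have "walks E k S b l \<subseteq> Pi\<^sub>E {0..l} (\<lambda>_. V)"
  proof
    fix w assume w: "w \<in> walks E k S b l"
    then have adm: "w 0 = b" "\<forall>j\<in>{1..l}. {w (j-1), w j} \<in> E" "\<forall>j>l. w j = undefined"
      unfolding walks_def admissible_walk_def closed_walk_def by auto
    have "\<forall>j\<in>{0..l}. w j \<in> V"
    proof
      fix j assume j: "j \<in> {0..l}"
      show "w j \<in> V"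
      proof (cases "j = 0")
        case True then show ?thesis using adm bV by simp
      next
        case False
        then have "{w (j-1), w j} \<in> E" using adm j by auto
        then show ?thesis using EV by blast
      qed
    qed
    moreover have "w \<in> extensional {0..l}" using adm(3) unfolding extensional_def by auto
    ultimately show "w \<in> Pi\<^sub>E {0..l} (\<lambda>_. V)" by (simp add: PiE_iff)
  qed
  moreover have "finite (Pi\<^sub>E {0..l} (\<lambda>_. V))" using fV by (intro finite_PiE) auto
  ultimately show ?thesis by (rule finite_subset)
qed

lemma T_hat_eq:
  "(T_hat E k S b l :: ('v,'f::comm_ring_1) epoly) =
   (\<Sum>w\<in>walks E k S b l. Poly_Mapping.single (\<Sum>j\<in>{1..l}. Poly_Mapping.single {w (j-1), w j} (1::nat)) 1)"
  unfolding T_hat_def walks_def by (intro sum.cong refl prod_evar) simp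

theorem mainTheorem2:
  fixes V :: "'v set" and E :: "'v set set" and S :: "nat \<Rightarrow> 'v set set"
    and k :: nat and b :: 'v and L :: nat
  assumes "CHAR('f::field) = 2"
    and "simple_graph V E"
    and "k \<ge> 1"
    and "\<forall>i\<in>{1..k}. S i \<subseteq> E"
    and "b \<in> V"
    and "\<exists>w. good_cycle E k S b L w"
    and "\<forall>L' w. good_cycle E k S b L' w \<longrightarrow> L \<le> L'"
  shows "homogeneous_of_degree (T_hat E k S b L :: ('v, 'f) epoly) L
    \<and> (T_hat E k S b L :: ('v, 'f) epoly) \<noteq> 0
    \<and> (\<forall>l. 1 \<le> l \<and> l < L \<longrightarrow> (T_hat E k S b l :: ('v, 'f) epoly) = 0)"
proof (intro conjI)
  note char = assms(1) and G = assms(2) and k = assms(3) and bV = assms(5)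
  define M where "M w l = (\<Sum>j\<in>{1..l}. Poly_Mapping.single {w (j-1), w j} (1::nat))" for w :: "nat \<Rightarrow> 'v" and l
  show "homogeneous_of_degree (T_hat E k S b L :: ('v, 'f) epoly) L"
    unfolding homogeneous_of_degree_def
  proof
    fix m assume m: "m \<in> Poly_Mapping.keys (T_hat E k S b L :: ('v, 'f) epoly)"
    have "Poly_Mapping.keys (T_hat E k S b L :: ('v, 'f) epoly)
       \<subseteq> (\<Union>w\<in>walks E k S b L. Poly_Mapping.keys (Poly_Mapping.single (M w L) (1::'f)))"
      unfolding T_hat_eq M_def by (rule keys_sum)
    then have "m \<in> (\<Union>w\<in>walks E k S b L. Poly_Mapping.keys (Poly_Mapping.single (M w L) (1::'f)))"
      using m by (rule subsetD)
    then obtain w where "m \<in> Poly_Mapping.keys (Poly_Mapping.single (M w L) (1::'f))" by (rule UN_E)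
    then have mw: "m = M w L" by simp
    have "mon_degree (M w L) = card {1..L}" unfolding M_def by (rule mon_degree_sum) simp
    then show "mon_degree m = L" using mw by simp
  qed
  show "(T_hat E k S b L :: ('v, 'f) epoly) \<noteq> 0"
  proof -
    obtain q where gc: "good_cycle E k S b L q" using assms(6) by blast
    then have L3: "L \<ge> 3" unfolding good_cycle_def simple_cycle_def by simp
    obtain w0 where w0: "w0 \<in> walks E k S b L" "inj_on w0 {0..<L}" using cycle_to_walk[OF gc] by blast
    have fin: "finite (walks E k S b L)" by (rule walks_finite[OF G bV])
    have "Poly_Mapping.lookup (T_hat E k S b L :: ('v, 'f) epoly) (M w0 L)
        = (\<Sum>w\<in>walks E k S b L. (if w = w0 then 1 else 0))"
      unfolding T_hat_eq lookup_sum M_def[symmetric]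
    proof (intro sum.cong refl)
      fix w assume w: "w \<in> walks E k S b L"
      have "M w L = M w0 L \<longleftrightarrow> w = w0"
      proof
        assume eq: "M w L = M w0 L"
        have "\<And>e. ecount w L e = ecount w0 L e"
        proof -
          fix e
          have "Poly_Mapping.lookup (M w L) e = Poly_Mapping.lookup (M w0 L) e" using eq by simp
          moreover have "\<And>u. Poly_Mapping.lookup (M u L) e = ecount u L e"
            unfolding M_def ecount_def by (rule lookup_mon) simp
          ultimately show "ecount w L e = ecount w0 L e" by simp
        qed
        then show "w = w0" by (rule uniq_walk[OF G k w w0(1) w0(2) L3])
      qed simp
      then show "Poly_Mapping.lookup (Poly_Mapping.single (M w L) (1::'f)) (M w0 L) = (if w = w0 then 1 else 0)"
        by (simp add: lookup_single when_def)
    qed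
    also have "\<dots> = 1" using fin w0(1) by simp
    finally have lk: "Poly_Mapping.lookup (T_hat E k S b L :: ('v, 'f) epoly) (M w0 L) = 1" .
    show ?thesis
    proof
      assume "(T_hat E k S b L :: ('v, 'f) epoly) = 0"
      then show False using lk by simp
    qed
  qed
  show "\<forall>l. 1 \<le> l \<and> l < L \<longrightarrow> (T_hat E k S b l :: ('v, 'f) epoly) = 0"
  proof (intro allI impI)
    fix l assume l: "1 \<le> l \<and> l < L"
    let ?g = "\<lambda>w. (\<Prod>j\<in>{1..l}. evar {w (j-1), w j} :: ('v,'f) epoly)"
    have fin: "finite (walks E k S b l)" by (rule walks_finite[OF G bV])
    have th: "(T_hat E k S b l :: ('v, 'f) epoly) = sum ?g (walks E k S b l)" unfolding T_hat_def walks_def by simp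
    have a1: "\<forall>x\<in>walks E k S b l. phi l x \<in> walks E k S b l" by (intro ballI phi_props(1))
    have a2: "\<forall>x\<in>walks E k S b l. phi l (phi l x) = x" by (intro ballI phi_props(2))
    have a3: "\<forall>x\<in>walks E k S b l. ?g (phi l x) = ?g x" by (intro ballI phi_props(3))
    have a4: "\<forall>x\<in>walks E k S b l. ?g x + ?g x = 0" by (intro ballI double_zero[OF char])
    have "sum ?g (walks E k S b l) = sum ?g {w\<in>walks E k S b l. phi l w = w}"
      by (rule involution_sum[OF fin a1 a2 a3 a4])
    also have "{w\<in>walks E k S b l. phi l w = w} = {}"
    proof (rule ccontr)
      assume "{w\<in>walks E k S b l. phi l w = w} \<noteq> {}"
      then obtain w where w: "w \<in> walks E k S b l" "phi l w = w" by auto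
      then have "find_seg w l 1 = None" using phi_props(4)[OF w(1)] by simp
      then obtain L' q where "good_cycle E k S b L' q" "L' \<le> l"
        using fixed_gives_cycle[OF G k w(1)] l by blast
      then show False using assms(7) l by fastforce
    qed
    finally show "(T_hat E k S b l :: ('v, 'f) epoly) = 0" using th by simp
  qed
qed

end
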